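(* Assume in addition that $p_j\ge -w_j$ for every $j\in J$. Let $S^*$ be an optimal solution of the Target Associated $k$-Set problem and let $\hat S$ be the set of genes returned by the Greedy algorithm. Then $W(\hat S)\ge W(S^* )/k$.
   Context: Let $J$ be a finite set of samples and $G$ a finite set of genes; for each $g\in G$ a set $A_g\subseteq J$ is given. Each $j\in J$ has a weight $w_j\in\mathbb{R}$ and penalty $p_j>0$, and $k$ is a positive integer. For $S\subseteq G$ and $j\in J$, let $c_S(j)=|\{g\in S: j\in A_g\}|$, $U(S)=\bigcup_{g\in S}A_g$, and $$W(S)=\sum_{j\in U(S)} w_j-\sum_{j\in U(S)}(c_S(j)-1)\,p_j .$$ The Target Associated $k$-Set problem asks for $S\subseteq G$ with $|S|\le k$ maximizing $W(S)$ (all $W$ values are computed with the original weights $w_j$). The Greedy algorithm: maintain current weights $\tilde w_j$, initialized to $\tilde w_j=w_j$, and a current solution $\hat S=\emptyset$. For $\ell=1,\dots,k$: compute $\tilde W(A_g)=\sum_{j\in A_g}\tilde w_j$ for every $g\in G\setminus \hat S$; if no $g$ has $\tilde W(A_g)>0$, stop; otherwise pick $g$ maximizing $\tilde W(A_g)$, add $g$ to $\hat S$, and set $\tilde w_j\leftarrow -p_j$ for all $j\in A_g$. The output is $\hat S$. (The paper's choice of penalties — $p_j$ equal to the average of the positive normalized weights when $w_j>0$, and $p_j=|w_j|$ when $w_j<0$ — satisfies $p_j\ge -w_j$.) *)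

theory Defs
  imports Complex_Main
begin

text \<open>Target Associated k-Set problem. Genes of type 'g, samples of type 'j.
  A g is the set of samples associated with gene g.\<close>

definition cov :: "('g \<Rightarrow> 'j set) \<Rightarrow> 'g set \<Rightarrow> 'j \<Rightarrow> nat" where
  "cov A S j = card {g \<in> S. j \<in> A g}"

definition Uset :: "('g \<Rightarrow> 'j set) \<Rightarrow> 'g set \<Rightarrow> 'j set" where
  "Uset A S = (\<Union>g\<in>S. A g)"

definition Wval :: "('g \<Rightarrow> 'j set) \<Rightarrow> ('j \<Rightarrow> real) \<Rightarrow> ('j \<Rightarrow> real) \<Rightarrow> 'g set \<Rightarrow> real" where
  "Wval A w p S = (\<Sum>j\<in>Uset A S. w j) - (\<Sum>j\<in>Uset A S. (real (cov A S j) - 1) * p j)"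

definition optimal_kset ::
  "'g set \<Rightarrow> ('g \<Rightarrow> 'j set) \<Rightarrow> ('j \<Rightarrow> real) \<Rightarrow> ('j \<Rightarrow> real) \<Rightarrow> nat \<Rightarrow> 'g set \<Rightarrow> bool" where
  "optimal_kset G A w p k S \<longleftrightarrow> S \<subseteq> G \<and> card S \<le> k \<and>
     (\<forall>T. T \<subseteq> G \<and> card T \<le> k \<longrightarrow> Wval A w p T \<le> Wval A w p S)"

text \<open>States reachable by the Greedy algorithm: (current weights, current solution,
  number of iterations performed). Ties in the choice of the maximiser are broken arbitrarily.\<close>

inductive greedy_reach ::
  "'g set \<Rightarrow> ('g \<Rightarrow> 'j set) \<Rightarrow> ('j \<Rightarrow> real) \<Rightarrow> ('j \<Rightarrow> real) \<Rightarrow> nat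
   \<Rightarrow> ('j \<Rightarrow> real) \<Rightarrow> 'g set \<Rightarrow> nat \<Rightarrow> bool"
  for G A w p k where
  init: "greedy_reach G A w p k w {} 0"
| step: "\<lbrakk> greedy_reach G A w p k wt S l; l < k; g \<in> G - S;
           (\<Sum>j\<in>A g. wt j) > 0;
           \<forall>h\<in>G - S. (\<Sum>j\<in>A h. wt j) \<le> (\<Sum>j\<in>A g. wt j) \<rbrakk>
         \<Longrightarrow> greedy_reach G A w p k (\<lambda>j. if j \<in> A g then - p j else wt j) (insert g S) (Suc l)"

definition greedy_output ::
  "'g set \<Rightarrow> ('g \<Rightarrow> 'j set) \<Rightarrow> ('j \<Rightarrow> real) \<Rightarrow> ('j \<Rightarrow> real) \<Rightarrow> nat \<Rightarrow> 'g set \<Rightarrow> bool" where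
  "greedy_output G A w p k S \<longleftrightarrow> (\<exists>wt l. greedy_reach G A w p k wt S l \<and>
      (l = k \<or> \<not> (\<exists>g\<in>G - S. (\<Sum>j\<in>A g. wt j) > 0)))"

end

theory Submission
  imports Defs
begin

lemma Uset_sub: "\<forall>g\<in>G. A g \<subseteq> J \<Longrightarrow> S \<subseteq> G \<Longrightarrow> Uset A S \<subseteq> J"
  unfolding Uset_def by blast

lemma cov_pos: "finite S \<Longrightarrow> j \<in> Uset A S \<Longrightarrow> cov A S j \<ge> 1"
  unfolding cov_def Uset_def
  by (metis (mono_tags, lifting) One_nat_def Suc_leI UN_iff card_gt_0_iff empty_iff finite_subset mem_Collect_eq subsetI)

lemma cov_zero: "j \<notin> Uset A S \<Longrightarrow> cov A S j = 0"
proof -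
  assume "j \<notin> Uset A S"
  then have "{g \<in> S. j \<in> A g} = {}" unfolding Uset_def by auto
  then show ?thesis unfolding cov_def by (metis card.empty)
qed

lemma cov_insert: "finite S \<Longrightarrow> g \<notin> S \<Longrightarrow>
   cov A (insert g S) j = cov A S j + (if j \<in> A g then 1 else 0)"
proof -
  assume f: "finite S" and g: "g \<notin> S"
  show ?thesis
  proof (cases "j \<in> A g")
    case True
    then have "{h \<in> insert g S. j \<in> A h} = insert g {h \<in> S. j \<in> A h}" by auto
    then show ?thesis using True f g by (simp add: cov_def)
  next
    case False
    then have "{h \<in> insert g S. j \<in> A h} = {h \<in> S. j \<in> A h}" by auto
    then show ?thesis using False by (simp add: cov_def)
  qed
qed

definition FF where "FF A w p S j = (if j \<in> Uset A S then w j - (real (cov A S j) - 1) * p j else 0)"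

lemma Wval_alt:
  assumes "finite J" "\<forall>g\<in>G. A g \<subseteq> J" "S \<subseteq> G"
  shows "Wval A w p S = (\<Sum>j\<in>J. FF A w p S j)"
proof -
  have U: "Uset A S \<subseteq> J" using Uset_sub assms by blast
  have "(\<Sum>j\<in>J. FF A w p S j) = (\<Sum>j\<in>Uset A S. w j - (real (cov A S j) - 1) * p j)"
    unfolding FF_def using sum.inter_restrict[OF assms(1), symmetric] U
    by (simp add: Int_absorb1 Int_commute sum.If_cases assms(1))
  then show ?thesis unfolding Wval_def by (simp add: sum_subtractf)
qed

lemma gain:
  assumes "finite J" "\<forall>g\<in>G. A g \<subseteq> J" "S \<subseteq> G" "finite S" "g \<in> G" "g \<notin> S"
  shows "Wval A w p (insert g S) = Wval A w p S + (\<Sum>j\<in>A g. if j \<in> Uset A S then - p j else w j)"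
proof -
  have Ag: "A g \<subseteq> J" using assms by auto
  have pt: "FF A w p (insert g S) j - FF A w p S j
     = (if j \<in> A g then (if j \<in> Uset A S then - p j else w j) else 0)" for j
    using cov_insert[OF assms(4,6), of A j] cov_zero[of j A S]
    by (auto simp: FF_def Uset_def algebra_simps)
  have "Wval A w p (insert g S) - Wval A w p S = (\<Sum>j\<in>J. FF A w p (insert g S) j - FF A w p S j)"
    using Wval_alt[OF assms(1,2)] assms by (simp add: sum_subtractf)
  also have "\<dots> = (\<Sum>j\<in>J. if j \<in> A g then (if j \<in> Uset A S then - p j else w j) else 0)"
    using pt by simp
  also have "\<dots> = (\<Sum>j\<in>A g. if j \<in> Uset A S then - p j else w j)"
    using sum.inter_restrict[OF assms(1), of _ "A g", symmetric] Ag
    by (simp add: Int_absorb1)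
  finally show ?thesis by simp
qed

lemma upper:
  assumes "finite J" "\<forall>g\<in>G. A g \<subseteq> J" "S \<subseteq> G" "finite S" "\<forall>j\<in>J. p j \<ge> - w j"
  shows "Wval A w p S \<le> (\<Sum>g\<in>S. \<Sum>j\<in>A g. w j)"
proof -
  have "(\<Sum>g\<in>S. \<Sum>j\<in>A g. w j) = (\<Sum>g\<in>S. \<Sum>j\<in>J. if j \<in> A g then w j else 0)"
  proof (rule sum.cong[OF refl])
    fix g assume "g \<in> S"
    then have "A g \<subseteq> J" using assms by auto
    then show "(\<Sum>j\<in>A g. w j) = (\<Sum>j\<in>J. if j \<in> A g then w j else 0)"
      using sum.inter_restrict[OF assms(1), of w "A g", symmetric] by (simp add: Int_absorb1)
  qed
  also have "\<dots> = (\<Sum>j\<in>J. \<Sum>g\<in>S. if j \<in> A g then w j else 0)" by (rule sum.swap)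
  also have "\<dots> = (\<Sum>j\<in>J. real (cov A S j) * w j)"
  proof (rule sum.cong[OF refl])
    fix j
    have "(\<Sum>g\<in>S. if j \<in> A g then w j else 0) = (\<Sum>g\<in>{g\<in>S. j \<in> A g}. w j)"
      using sum.inter_filter[OF assms(4), of "\<lambda>_. w j" "\<lambda>g. j \<in> A g"] by simp
    then show "(\<Sum>g\<in>S. if j \<in> A g then w j else 0) = real (cov A S j) * w j"
      by (simp add: cov_def)
  qed
  finally have E: "(\<Sum>g\<in>S. \<Sum>j\<in>A g. w j) = (\<Sum>j\<in>J. real (cov A S j) * w j)" .
  have "(\<Sum>j\<in>J. FF A w p S j) \<le> (\<Sum>j\<in>J. real (cov A S j) * w j)"
  proof (rule sum_mono)
    fix j assume j: "j \<in> J"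
    show "FF A w p S j \<le> real (cov A S j) * w j"
    proof (cases "j \<in> Uset A S")
      case True
      have c: "real (cov A S j) - 1 \<ge> 0" using cov_pos[OF assms(4) True] by simp
      have "(real (cov A S j) - 1) * (- w j) \<le> (real (cov A S j) - 1) * p j"
        using c assms(5) j mult_left_mono by blast
      then show ?thesis using True by (simp add: FF_def algebra_simps)
    next
      case False then show ?thesis by (simp add: FF_def cov_zero)
    qed
  qed
  then show ?thesis using E Wval_alt[OF assms(1-3)] by simp
qed

lemma Wval_empty: "Wval A w p {} = 0" by (simp add: Wval_def Uset_def)

lemma inv:
  assumes J: "finite J" and AJ: "\<forall>g\<in>G. A g \<subseteq> J"
    and R: "greedy_reach G A w p k wt S l"
  shows "S \<subseteq> G \<and> finite S \<and> (\<forall>j\<in>J. wt j = (if j \<in> Uset A S then - p j else w j))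
     \<and> Wval A w p S \<ge> 0 \<and> (l = 0 \<longrightarrow> S = {} \<and> wt = w)
     \<and> (l > 0 \<longrightarrow> (\<forall>h\<in>G. (\<Sum>j\<in>A h. w j) \<le> Wval A w p S))"
  using R
proof (induction rule: greedy_reach.induct)
  case init
  then show ?case by (simp add: Wval_empty Uset_def)
next
  case (step wt S l g)
  have SG: "S \<subseteq> G" and fS: "finite S" and wt: "\<forall>j\<in>J. wt j = (if j \<in> Uset A S then - p j else w j)"
    and W0: "Wval A w p S \<ge> 0" and L0: "l = 0 \<longrightarrow> S = {} \<and> wt = w"
    and Lp: "l > 0 \<longrightarrow> (\<forall>h\<in>G. (\<Sum>j\<in>A h. w j) \<le> Wval A w p S)" using step.IH by auto
  have gG: "g \<in> G" "g \<notin> S" using step.hyps by auto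
  have Ag: "A g \<subseteq> J" using AJ gG by auto
  have gs: "(\<Sum>j\<in>A g. if j \<in> Uset A S then - p j else w j) = (\<Sum>j\<in>A g. wt j)"
    using wt Ag by (intro sum.cong) auto
  have newW: "Wval A w p (insert g S) = Wval A w p S + (\<Sum>j\<in>A g. wt j)"
    using gain[OF J AJ SG fS gG] gs by simp
  have pos: "(\<Sum>j\<in>A g. wt j) > 0" using step.hyps by auto
  have c1: "insert g S \<subseteq> G" using SG gG by auto
  have c3: "\<forall>j\<in>J. (if j \<in> A g then - p j else wt j) = (if j \<in> Uset A (insert g S) then - p j else w j)"
    using wt by (auto simp: Uset_def)
  have c5: "\<forall>h\<in>G. (\<Sum>j\<in>A h. w j) \<le> Wval A w p (insert g S)"
  proof
    fix h assume h: "h \<in> G"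
    show "(\<Sum>j\<in>A h. w j) \<le> Wval A w p (insert g S)"
    proof (cases "l = 0")
      case True
      then have "S = {}" "wt = w" using L0 by auto
      then have "(\<Sum>j\<in>A h. w j) \<le> (\<Sum>j\<in>A g. wt j)" using step.hyps(5) h by auto
      then show ?thesis using newW \<open>S = {}\<close> by (simp add: Wval_empty)
    next
      case False
      then show ?thesis using Lp h newW pos by force
    qed
  qed
  show ?case using c1 fS c3 newW pos W0 c5 by auto
qed

theorem mainTheorem3:
  fixes J :: "'j set" and G :: "'g set" and A :: "'g \<Rightarrow> 'j set"
    and w p :: "'j \<Rightarrow> real" and k :: nat and Sopt Shat :: "'g set"
  assumes "finite J" and "finite G"
    and "\<forall>g\<in>G. A g \<subseteq> J"
    and "\<forall>j\<in>J. p j > 0"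
    and "k > 0"
    and "\<forall>j\<in>J. p j \<ge> - w j"
    and "optimal_kset G A w p k Sopt"
    and "greedy_output G A w p k Shat"
  shows "Wval A w p Shat \<ge> Wval A w p Sopt / real k"
proof -
  obtain wt l where R: "greedy_reach G A w p k wt Shat l"
    and E: "l = k \<or> \<not> (\<exists>g\<in>G - Shat. (\<Sum>j\<in>A g. wt j) > 0)"
    using assms(8) unfolding greedy_output_def by blast
  have I: "Shat \<subseteq> G \<and> finite Shat \<and> Wval A w p Shat \<ge> 0 \<and> (l = 0 \<longrightarrow> Shat = {} \<and> wt = w)
     \<and> (l > 0 \<longrightarrow> (\<forall>h\<in>G. (\<Sum>j\<in>A h. w j) \<le> Wval A w p Shat))"
    using inv[OF assms(1,3) R] by blast
  have SoG: "Sopt \<subseteq> G" and cSo: "card Sopt \<le> k" using assms(7) unfolding optimal_kset_def by auto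
  have fSo: "finite Sopt" using SoG assms(2) finite_subset by blast
  have up: "Wval A w p Sopt \<le> (\<Sum>g\<in>Sopt. \<Sum>j\<in>A g. w j)"
    using upper[OF assms(1,3) SoG fSo assms(6)] .
  have kpos: "real k > 0" using assms(5) by simp
  show ?thesis
  proof (cases "l = 0")
    case True
    then have "Shat = {}" "wt = w" using I by auto
    then have "\<forall>g\<in>G. (\<Sum>j\<in>A g. w j) \<le> 0" using E True assms(5) by auto
    then have "(\<Sum>g\<in>Sopt. \<Sum>j\<in>A g. w j) \<le> 0" using SoG by (meson sum_nonpos subsetD)
    then have "Wval A w p Sopt \<le> 0" using up by linarith
    then have "Wval A w p Sopt / real k \<le> 0" using kpos by (simp add: divide_nonpos_pos)
    then show ?thesis using I by linarith
  next
    case False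
    then have B: "\<forall>h\<in>G. (\<Sum>j\<in>A h. w j) \<le> Wval A w p Shat" using I by auto
    have "(\<Sum>g\<in>Sopt. \<Sum>j\<in>A g. w j) \<le> (\<Sum>g\<in>Sopt. Wval A w p Shat)"
      using B SoG by (intro sum_mono) auto
    also have "\<dots> = real (card Sopt) * Wval A w p Shat" by simp
    also have "\<dots> \<le> real k * Wval A w p Shat"
      using cSo I by (intro mult_right_mono) auto
    finally have "Wval A w p Sopt \<le> real k * Wval A w p Shat" using up by linarith
    then show ?thesis using kpos by (simp add: divide_le_eq mult.commute)
  qed
qed

end
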